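(* Let $X$ be a real Banach space, $f\in\Gamma_0(X)$ and $S_f^=\ne\emptyset$. Suppose there exist sequences $\{x_k\}\subset X$ and $\{x_k^*\}\subset X^*$ such that $x_k^*\in\partial f(x_k)$ for all $k$, $\|x_k\|\to\infty$, $\|x_k^*\|\to0$ as $k\to\infty$, and $\{f(x_k)\}$ is bounded below. Then for any $\varepsilon\in[0,|\partial f|_{\rm bd}]$ and any $g\in\mathrm{Ptb}(f,\varepsilon)$, the function $g-f$ is constant.
   Context: $\Gamma_0(X)$ denotes the class of extended-real-valued proper convex lower semicontinuous functions on $X$. For convex $f$, $\partial f(x):=\{x^*\in X^*\mid \langle x^*,u-x\rangle\le f(u)-f(x)\ \forall u\in X\}$ (empty if $x\notin\mathrm{dom}f$). $d(0,\emptyset)=+\infty$, $\inf\emptyset=+\infty$. $S_f:=\{x\mid f(x)\le0\}$, $S_f^=:=\{x\mid f(x)=0\}$. $|\partial f|_{\rm bd}:=\inf_{f(x)=0} d(0,\mathrm{bd}\,\partial f(x))$ (boundary in the norm topology of $X^*$). For $x\in S_f^=$, $\varepsilon\ge0$, $\delta\ge0$: $\tau(f,x,\varepsilon,\delta):=\inf_{u:\,f(u)\ge-\varepsilon\|u-x\|-\delta} d(0,\partial f(u))$ if $0\notin\mathrm{int}\,\partial f(x)$, and $\tau(f,x,\varepsilon,\delta):=d(0,\mathrm{bd}\,\partial f(x))$ if $0\in\mathrm{int}\,\partial f(x)$. Let $S_f\neq\emptyset$, $\varepsilon\ge0$. A function $g:X\to\mathbb{R}\cup\{+\infty\}$ is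 an $\varepsilon$-perturbation of $f$ if $S_g\ne\emptyset$, $g=f+p$ with $p:X\to\mathbb{R}$ convex, and there exist $x\in S_f^=$ and $\xi\ge0$ such that $\xi+|\partial f|_{\rm bd}-\tau(f,x,\xi,|p(x)|)\le\varepsilon$ and $|p(u)-p(x)|\le\xi\|u-x\|$ for all $u\in X$. The set of these is $\mathrm{Ptb}(f,\varepsilon)$. *)

theory Defs
  imports "HOL-Analysis.Analysis"
begin

text \<open>Dual space X* is rendered as the bounded linear functionals 'a \<Rightarrow>L real
  with the operator norm; extended-real-valued functions take values in ereal.\<close>

definition proper_fun :: "('a \<Rightarrow> ereal) \<Rightarrow> bool" where
  "proper_fun f \<longleftrightarrow> (\<forall>x. f x \<noteq> -\<infinity>) \<and> (\<exists>x. f x \<noteq> \<infinity>)"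

definition convex_efun :: "('a::real_vector \<Rightarrow> ereal) \<Rightarrow> bool" where
  "convex_efun f \<longleftrightarrow> (\<forall>x y t. 0 \<le> t \<and> t \<le> 1 \<longrightarrow>
      f ((1 - t) *\<^sub>R x + t *\<^sub>R y) \<le> ereal (1 - t) * f x + ereal t * f y)"

definition lsc_fun :: "('a::topological_space \<Rightarrow> ereal) \<Rightarrow> bool" where
  "lsc_fun f \<longleftrightarrow> (\<forall>x. f x \<le> Liminf (at x) f)"

definition Gamma0 :: "('a::real_normed_vector \<Rightarrow> ereal) set" where
  "Gamma0 = {f. proper_fun f \<and> convex_efun f \<and> lsc_fun f}"

definition subdiff :: "('a::real_normed_vector \<Rightarrow> ereal) \<Rightarrow> 'a \<Rightarrow> ('a \<Rightarrow>\<^sub>L real) set" where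
  "subdiff f x = (if f x \<noteq> \<infinity> \<and> f x \<noteq> -\<infinity> then
      {xs. \<forall>u. ereal (blinfun_apply xs (u - x)) \<le> f u - f x} else {})"

text \<open>distance from 0 to a set of functionals; Inf of the empty set is \<infinity>\<close>
definition dist0 :: "('a::real_normed_vector \<Rightarrow>\<^sub>L real) set \<Rightarrow> ereal" where
  "dist0 A = (INF y\<in>A. ereal (norm y))"

definition sublevel0 :: "('a \<Rightarrow> ereal) \<Rightarrow> 'a set" where
  "sublevel0 f = {x. f x \<le> 0}"

definition level0 :: "('a \<Rightarrow> ereal) \<Rightarrow> 'a set" where
  "level0 f = {x. f x = 0}"

definition subdiff_bd :: "('a::real_normed_vector \<Rightarrow> ereal) \<Rightarrow> ereal" where
  "subdiff_bd f = (INF x\<in>level0 f. dist0 (frontier (subdiff f x)))"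

definition tau :: "('a::real_normed_vector \<Rightarrow> ereal) \<Rightarrow> 'a \<Rightarrow> real \<Rightarrow> real \<Rightarrow> ereal" where
  "tau f x \<epsilon> \<delta> = (if 0 \<notin> interior (subdiff f x)
      then (INF u\<in>{u. f u \<ge> ereal (- \<epsilon> * norm (u - x) - \<delta>)}. dist0 (subdiff f u))
      else dist0 (frontier (subdiff f x)))"

definition Ptb :: "('a::real_normed_vector \<Rightarrow> ereal) \<Rightarrow> real \<Rightarrow> ('a \<Rightarrow> ereal) set" where
  "Ptb f \<epsilon> = {g. sublevel0 g \<noteq> {} \<and>
      (\<exists>p :: 'a \<Rightarrow> real. convex_on UNIV p \<and> g = (\<lambda>u. f u + ereal (p u)) \<and>
        (\<exists>x \<in> level0 f. \<exists>\<xi> \<ge> 0.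
           ereal \<xi> + subdiff_bd f - tau f x \<xi> \<bar>p x\<bar> \<le> ereal \<epsilon> \<and>
           (\<forall>u. \<bar>p u - p x\<bar> \<le> \<xi> * norm (u - x))))}"

end

theory Submission imports Defs begin

definition sublin :: "('a::real_vector \<Rightarrow> real) \<Rightarrow> bool" where
  "sublin q \<longleftrightarrow> (\<forall>x y. q (x+y) \<le> q x + q y) \<and> (\<forall>c x. c \<ge> 0 \<longrightarrow> q (c *\<^sub>R x) = c * q x)"

lemma sublin_0: "sublin q \<Longrightarrow> q 0 = 0"
  unfolding sublin_def by (metis mult_zero_left order_refl scaleR_zero_left)

lemma sublin_neg: "sublin q \<Longrightarrow> - q (- y) \<le> q y"
proof -
  assume s: "sublin q"
  have "q (y + - y) \<le> q y + q (-y)" using s unfolding sublin_def by blast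
  thus ?thesis using sublin_0[OF s] by simp
qed

lemma sublin_odd_linear:
  assumes s: "sublin q" and odd: "\<And>x. q (- x) = - q x"
  shows "linear q"
proof
  fix x y
  have a: "q (x+y) \<le> q x + q y" using s unfolding sublin_def by blast
  have "q (-x + -y) \<le> q (-x) + q (-y)" using s unfolding sublin_def by blast
  hence "q (-(x+y)) \<le> - q x - q y" using odd by (simp add: add.commute)
  hence "q (x+y) \<ge> q x + q y" using odd[of "x+y"] by simp
  with a show "q (x+y) = q x + q y" by simp
next
  fix c :: real and x
  show "q (c *\<^sub>R x) = c *\<^sub>R q x"
  proof (cases "c \<ge> 0")
    case True thus ?thesis using s unfolding sublin_def by simp
  next
    case False
    have hh: "\<forall>c x. c \<ge> 0 \<longrightarrow> q (c *\<^sub>R x) = c * q x" using s unfolding sublin_def by blast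
    have "q ((-c) *\<^sub>R (-x)) = (-c) * q (-x)" using hh[rule_format, of "-c" "-x"] False by linarith
    moreover have "(-c) *\<^sub>R (-x) = c *\<^sub>R x" by simp
    ultimately show ?thesis using odd[of x] by simp
  qed
qed

definition qdir :: "('a::real_vector \<Rightarrow> real) \<Rightarrow> 'a \<Rightarrow> 'a \<Rightarrow> real" where
  "qdir q x y = Inf ((\<lambda>t. q (y + t *\<^sub>R x) - t * q x) ` {0..})"

lemma qdir_bdd:
  assumes s: "sublin q"
  shows "bdd_below ((\<lambda>t. q (y + t *\<^sub>R x) - t * q x) ` {0..})"
proof (rule bdd_belowI2)
  fix t :: real assume t: "t \<in> {0..}"
  have "q ((y + t *\<^sub>R x) + (-y)) \<le> q (y + t *\<^sub>R x) + q (-y)" using s unfolding sublin_def by blast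
  moreover have "q (t *\<^sub>R x) = t * q x" using s t unfolding sublin_def by simp
  ultimately show "- q (-y) \<le> q (y + t *\<^sub>R x) - t * q x" by simp
qed

lemma qdir_le:
  assumes s: "sublin q" and t: "t \<ge> 0"
  shows "qdir q x y \<le> q (y + t *\<^sub>R x) - t * q x"
  unfolding qdir_def by (rule cInf_lower[OF _ qdir_bdd[OF s]]) (use t in auto)

lemma qdir_ge:
  assumes "\<And>t. t \<ge> 0 \<Longrightarrow> a \<le> q (y + t *\<^sub>R x) - t * q x"
  shows "a \<le> qdir q x y"
  unfolding qdir_def by (rule cInf_greatest) (use assms in auto)

lemma qdir_sublin:
  assumes s: "sublin q"
  shows "sublin (qdir q x)"
  unfolding sublin_def
proof (intro conjI allI impI)
  fix y z
  have sa: "\<And>a b. q (a+b) \<le> q a + q b" using s unfolding sublin_def by blast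
  have "qdir q x (y+z) - (q (z + t *\<^sub>R x) - t * q x) \<le> qdir q x y" if t: "t \<ge> 0" for t
  proof (rule qdir_ge)
    fix u :: real assume u: "u \<ge> 0"
    have "qdir q x (y+z) \<le> q (y + z + (u+t) *\<^sub>R x) - (u+t) * q x" using qdir_le[OF s] u t by simp
    also have "q (y + z + (u+t) *\<^sub>R x) \<le> q (y + u *\<^sub>R x) + q (z + t *\<^sub>R x)"
      using sa[of "y + u *\<^sub>R x" "z + t *\<^sub>R x"] by (simp add: algebra_simps scaleR_add_left)
    finally show "qdir q x (y+z) - (q (z + t *\<^sub>R x) - t * q x) \<le> q (y + u *\<^sub>R x) - u * q x"
      by (simp add: algebra_simps)
  qed
  hence "qdir q x (y+z) - qdir q x y \<le> qdir q x z"
    by (intro qdir_ge) (smt (verit))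
  thus "qdir q x (y+z) \<le> qdir q x y + qdir q x z" by simp
next
  fix c :: real and y assume c: "c \<ge> 0"
  have hom: "\<And>c a. c \<ge> 0 \<Longrightarrow> q (c *\<^sub>R a) = c * q a" using s unfolding sublin_def by blast
  show "qdir q x (c *\<^sub>R y) = c * qdir q x y"
  proof (cases "c = 0")
    case True
    have "qdir q x 0 = 0"
    proof (rule antisym)
      show "qdir q x 0 \<le> 0" using qdir_le[OF s, of 0 x 0] sublin_0[OF s] by simp
      show "0 \<le> qdir q x 0" by (rule qdir_ge) (simp add: hom)
    qed
    thus ?thesis using True by simp
  next
    case False
    hence cp: "c > 0" using c by simp
    show ?thesis
    proof (rule antisym)
      have "qdir q x (c *\<^sub>R y) / c \<le> qdir q x y"
      proof (rule qdir_ge)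
        fix t :: real assume t: "t \<ge> 0"
        have "qdir q x (c *\<^sub>R y) \<le> q (c *\<^sub>R y + (c*t) *\<^sub>R x) - (c*t) * q x"
          using qdir_le[OF s] t cp by simp
        also have "q (c *\<^sub>R y + (c*t) *\<^sub>R x) = c * q (y + t *\<^sub>R x)"
          using hom[of c "y + t *\<^sub>R x"] cp by (simp add: scaleR_add_right)
        finally show "qdir q x (c *\<^sub>R y) / c \<le> q (y + t *\<^sub>R x) - t * q x"
          using cp by (simp add: divide_le_eq field_simps)
      qed
      thus "qdir q x (c *\<^sub>R y) \<le> c * qdir q x y" using cp by (simp add: divide_le_eq mult.commute)
      show "c * qdir q x y \<le> qdir q x (c *\<^sub>R y)"
      proof (rule qdir_ge)
        fix t :: real assume t: "t \<ge> 0"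
        have "c * qdir q x y \<le> c * (q (y + (t/c) *\<^sub>R x) - (t/c) * q x)"
          using qdir_le[OF s, of "t/c" x y] t cp by simp
        also have "c * q (y + (t/c) *\<^sub>R x) = q (c *\<^sub>R y + t *\<^sub>R x)"
          using hom[of c "y + (t/c) *\<^sub>R x"] cp by (simp add: scaleR_add_right)
        moreover have "c * ((t/c) * q x) = t * q x" using cp by simp
        ultimately show "c * qdir q x y \<le> q (c *\<^sub>R y + t *\<^sub>R x) - t * q x"
          by (simp add: right_diff_distrib)
      qed
    qed
  qed
qed

lemma minimal_sublin_linear:
  assumes s: "sublin q"
    and minq: "\<And>q'. sublin q' \<Longrightarrow> (\<forall>y. q' y \<le> q y) \<Longrightarrow> q' = q"
  shows "linear q"
proof (rule sublin_odd_linear[OF s])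
  fix x
  have "qdir q x = q"
  proof (rule minq[OF qdir_sublin[OF s]], intro allI)
    fix y show "qdir q x y \<le> q y" using qdir_le[OF s, of 0 x y] by simp
  qed
  hence "q (-x) \<le> q (-x + 1 *\<^sub>R x) - 1 * q x" using qdir_le[OF s, of 1 x "-x"] by simp
  hence "q (-x) \<le> - q x" using sublin_0[OF s] by simp
  thus "q (-x) = - q x" using sublin_neg[OF s, of x] by simp
qed

lemma chain_inf_sublin:
  fixes Q :: "('a::real_normed_vector \<Rightarrow> real) set"
  assumes ne: "Q \<noteq> {}" and sQ: "\<And>q. q \<in> Q \<Longrightarrow> sublin q"
    and bQ: "\<And>q y. q \<in> Q \<Longrightarrow> q y \<le> norm y"
    and ch: "\<And>q1 q2. q1 \<in> Q \<Longrightarrow> q2 \<in> Q \<Longrightarrow> (\<forall>y. q1 y \<le> q2 y) \<or> (\<forall>y. q2 y \<le> q1 y)"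
  shows "sublin (\<lambda>y. Inf ((\<lambda>q. q y) ` Q))"
proof -
  define m where "m y = Inf ((\<lambda>q. q y) ` Q)" for y
  have bdd: "bdd_below ((\<lambda>q. q y) ` Q)" for y
  proof (rule bdd_belowI2)
    fix q assume q: "q \<in> Q"
    have "- q (- y) \<le> q y" by (rule sublin_neg[OF sQ[OF q]])
    moreover have "q (-y) \<le> norm y" using bQ[OF q, of "-y"] by simp
    ultimately show "- norm y \<le> q y" by simp
  qed
  have mle: "m y \<le> q y" if "q \<in> Q" for q y
    unfolding m_def by (rule cInf_lower[OF _ bdd]) (use that in auto)
  have mge: "a \<le> m y" if "\<And>q. q \<in> Q \<Longrightarrow> a \<le> q y" for a y
    unfolding m_def by (rule cInf_greatest) (use that ne in auto)
  have sa: "q (a+b) \<le> q a + q b" if "q \<in> Q" for q a b using sQ[OF that] unfolding sublin_def by blast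
  have hom: "q (c *\<^sub>R a) = c * q a" if "q \<in> Q" "c \<ge> 0" for q a c using sQ[OF that(1)] that(2) unfolding sublin_def by blast
  have "sublin m"
    unfolding sublin_def
  proof (intro conjI allI impI)
    fix y z
    have "m (y+z) \<le> q1 y + q2 z" if "q1 \<in> Q" "q2 \<in> Q" for q1 q2
    proof -
      from ch[OF that] show ?thesis
      proof
        assume "\<forall>y. q1 y \<le> q2 y"
        hence "q1 z \<le> q2 z" by blast
        moreover have "m (y+z) \<le> q1 y + q1 z" using mle[OF that(1), of "y+z"] sa[OF that(1), of y z] by linarith
        ultimately show ?thesis by simp
      next
        assume "\<forall>y. q2 y \<le> q1 y"
        hence "q2 y \<le> q1 y" by blast
        moreover have "m (y+z) \<le> q2 y + q2 z" using mle[OF that(2), of "y+z"] sa[OF that(2), of y z] by linarith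
        ultimately show ?thesis by simp
      qed
    qed
    hence "m (y+z) - q2 z \<le> m y" if "q2 \<in> Q" for q2 using that by (intro mge) (smt (verit))
    hence "m (y+z) - m y \<le> m z" by (intro mge) (smt (verit))
    thus "m (y+z) \<le> m y + m z" by simp
  next
    fix c :: real and y assume c: "c \<ge> 0"
    show "m (c *\<^sub>R y) = c * m y"
    proof (cases "c = 0")
      case True
      have "m 0 = 0"
      proof (rule antisym)
        obtain q where q: "q \<in> Q" using ne by blast
        show "m 0 \<le> 0" using mle[OF q, of 0] sublin_0[OF sQ[OF q]] by simp
        show "0 \<le> m 0" by (rule mge) (simp add: sublin_0[OF sQ])
      qed
      thus ?thesis using True by simp
    next
      case False
      hence cp: "c > 0" using c by simp
      show ?thesis
      proof (rule antisym)
        have "m (c *\<^sub>R y) / c \<le> m y"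
        proof (rule mge)
          fix q assume q: "q \<in> Q"
          have "m (c *\<^sub>R y) \<le> c * q y" using mle[OF q, of "c *\<^sub>R y"] hom[OF q c] by simp
          thus "m (c *\<^sub>R y) / c \<le> q y" using cp by (simp add: divide_le_eq mult.commute)
        qed
        thus "m (c *\<^sub>R y) \<le> c * m y" using cp by (simp add: divide_le_eq mult.commute)
        show "c * m y \<le> m (c *\<^sub>R y)"
        proof (rule mge)
          fix q assume q: "q \<in> Q"
          show "c * m y \<le> q (c *\<^sub>R y)" using mle[OF q, of y] hom[OF q c] cp by simp
        qed
      qed
    qed
  qed
  thus ?thesis unfolding m_def .
qed

lemma norming_functional:
  fixes v :: "'a::real_normed_vector"
  shows "\<exists>L::'a \<Rightarrow>\<^sub>L real. norm L \<le> 1 \<and> blinfun_apply L v = norm v"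
proof -
  define S where "S = {q. sublin q \<and> (\<forall>y. q y \<le> norm y) \<and> q (-v) \<le> - norm v}"
  define E where "E q = {(y,a). q y \<le> (a::real)}" for q :: "'a \<Rightarrow> real"
  have Esub: "E q1 \<subseteq> E q2 \<longleftrightarrow> (\<forall>y. q2 y \<le> q1 y)" for q1 q2
  proof
    assume "E q1 \<subseteq> E q2"
    thus "\<forall>y. q2 y \<le> q1 y" unfolding E_def by auto
  next
    assume "\<forall>y. q2 y \<le> q1 y"
    thus "E q1 \<subseteq> E q2" unfolding E_def by (auto intro: order_trans)
  qed
  have snorm: "sublin (norm :: 'a \<Rightarrow> real)" unfolding sublin_def by (simp add: norm_triangle_ineq)
  define q0 where "q0 = qdir norm v"
  have q0S: "q0 \<in> S"
  proof -
    have "q0 y \<le> norm y" for y using qdir_le[OF snorm, of 0 v y] unfolding q0_def by simp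
    moreover have "q0 (-v) \<le> - norm v"
    proof -
      have "q0 (-v) \<le> norm (-v + 2 *\<^sub>R v) - 2 * norm v" using qdir_le[OF snorm, of 2 v "-v"] unfolding q0_def by simp
      also have "-v + 2 *\<^sub>R v = v" by (simp add: scaleR_2)
      finally show ?thesis by simp
    qed
    ultimately show ?thesis unfolding S_def q0_def using qdir_sublin[OF snorm] by auto
  qed
  have "\<exists>M\<in>E ` S. \<forall>X\<in>E ` S. M \<subseteq> X \<longrightarrow> X = M"
  proof (rule Zorn_Lemma2, intro ballI)
    fix C assume C: "C \<in> chains (E ` S)"
    hence CA: "C \<subseteq> E ` S" and chC: "\<And>X Y. X \<in> C \<Longrightarrow> Y \<in> C \<Longrightarrow> X \<subseteq> Y \<or> Y \<subseteq> X"
      unfolding chains_def chain_subset_def by auto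
    show "\<exists>U\<in>E ` S. \<forall>X\<in>C. X \<subseteq> U"
    proof (cases "C = {}")
      case True thus ?thesis using q0S by blast
    next
      case False
      define Q where "Q = {q\<in>S. E q \<in> C}"
      have ne: "Q \<noteq> {}" using False CA unfolding Q_def by blast
      have sQ: "sublin q" "\<And>y. q y \<le> norm y" "q (-v) \<le> - norm v" if "q \<in> Q" for q
        using that unfolding Q_def S_def by auto
      have chQ: "(\<forall>y. q1 y \<le> q2 y) \<or> (\<forall>y. q2 y \<le> q1 y)" if "q1 \<in> Q" "q2 \<in> Q" for q1 q2
        using chC[of "E q1" "E q2"] that unfolding Q_def Esub by auto
      define m where "m y = Inf ((\<lambda>q. q y) ` Q)" for y
      have sm: "sublin m" unfolding m_def by (rule chain_inf_sublin[OF ne]) (use sQ chQ in auto)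
      have bdd: "bdd_below ((\<lambda>q. q y) ` Q)" for y
      proof (rule bdd_belowI2)
        fix q assume q: "q \<in> Q"
        have "- q (- y) \<le> q y" by (rule sublin_neg[OF sQ(1)[OF q]])
        moreover have "q (-y) \<le> norm y" using sQ(2)[OF q, of "-y"] by simp
        ultimately show "- norm y \<le> q y" by simp
      qed
      have mle: "m y \<le> q y" if "q \<in> Q" for q y
        unfolding m_def by (rule cInf_lower[OF _ bdd]) (use that in auto)
      obtain q1 where q1: "q1 \<in> Q" using ne by blast
      have "m \<in> S" unfolding S_def using sm mle[OF q1] sQ[OF q1] by (auto intro: order_trans)
      moreover have "\<forall>X\<in>C. X \<subseteq> E m"
      proof
        fix X assume X: "X \<in> C"
        then obtain q where "q \<in> S" "X = E q" using CA by blast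
        hence "q \<in> Q" using X unfolding Q_def by auto
        hence "\<forall>y. m y \<le> q y" using mle by blast
        thus "X \<subseteq> E m" using \<open>X = E q\<close> Esub[of q m] by simp
      qed
      ultimately show ?thesis by blast
    qed
  qed
  then obtain qm where qmS: "qm \<in> S" and maxi: "\<And>q. q \<in> S \<Longrightarrow> E qm \<subseteq> E q \<Longrightarrow> E q = E qm" by blast
  have sqm: "sublin qm" and bqm: "\<And>y. qm y \<le> norm y" and vqm: "qm (-v) \<le> - norm v"
    using qmS unfolding S_def by auto
  have lin: "linear qm"
  proof (rule minimal_sublin_linear[OF sqm])
    fix q' assume s': "sublin q'" and le: "\<forall>y. q' y \<le> qm y"
    have "q' \<in> S" unfolding S_def using s' le bqm vqm by (auto intro: order_trans)
    moreover have "E qm \<subseteq> E q'" using le unfolding Esub .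
    ultimately have "E q' = E qm" using maxi by blast
    hence "\<forall>y. qm y \<le> q' y" using Esub[of q' qm] by auto
    with le show "q' = qm" by (intro ext antisym) auto
  qed
  have odd: "qm (-y) = - qm y" for y using linear_neg[OF lin] .
  have ab: "norm (qm y) \<le> norm y * 1" for y
    using bqm[of y] bqm[of "-y"] odd[of y] by auto
  have bl: "bounded_linear qm"
    by (rule bounded_linear_intro[OF linear_add[OF lin] linear_scale[OF lin] ab])
  have "norm (Blinfun qm) \<le> 1"
    by (rule norm_blinfun_bound) (use ab bounded_linear_Blinfun_apply[OF bl] in auto)
  moreover have "qm v = norm v" using bqm[of v] vqm odd[of v] by simp
  ultimately show ?thesis using bounded_linear_Blinfun_apply[OF bl] by auto
qed

lemma no_interior:
  fixes f :: "'a::real_normed_vector \<Rightarrow> ereal"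
    and x :: "nat \<Rightarrow> 'a" and xs :: "nat \<Rightarrow> ('a \<Rightarrow>\<^sub>L real)"
  assumes sd: "\<And>k. xs k \<in> subdiff f (x k)"
    and xinf: "filterlim (\<lambda>k. norm (x k)) at_top sequentially"
    and xs0: "(\<lambda>k. norm (xs k)) \<longlonglongrightarrow> 0"
    and f0: "f x0 = 0"
  shows "0 \<notin> interior (subdiff f x0)"
proof
  assume "0 \<in> interior (subdiff f x0)"
  then obtain r where r: "r > 0" "ball 0 r \<subseteq> subdiff f x0" by (meson mem_interior)
  have e1: "eventually (\<lambda>k. norm (xs k) < r/2) sequentially"
    using order_tendstoD(2)[OF xs0, of "r/2"] r by simp
  have e2: "eventually (\<lambda>k. norm x0 + 1 \<le> norm (x k)) sequentially"
    using xinf unfolding filterlim_at_top by blast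
  obtain k where k1: "norm (xs k) < r/2" and k2: "norm x0 + 1 \<le> norm (x k)"
    using eventually_conj[OF e1 e2] eventually_sequentially by auto
  define v where "v = x k - x0"
  have vpos: "norm v > 0"
  proof -
    have "norm (x k) \<le> norm v + norm x0" unfolding v_def using norm_triangle_ineq[of "x k - x0" x0] by simp
    hence "1 \<le> norm v" using k2 by simp
    thus ?thesis by linarith
  qed
  obtain L :: "'a \<Rightarrow>\<^sub>L real" where L: "norm L \<le> 1" "blinfun_apply L v = norm v"
    using norming_functional by blast
  define ys where "ys = (r/2) *\<^sub>R L"
  have "norm ys \<le> r/2" unfolding ys_def using L r by (simp add: mult_left_le)
  hence "ys \<in> ball 0 r" using r by simp
  hence ysd: "ys \<in> subdiff f x0" using r by blast
  have nonempty: "f (x k) \<noteq> \<infinity> \<and> f (x k) \<noteq> -\<infinity>" using sd[of k] unfolding subdiff_def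
    by (auto split: if_splits)
  then obtain a where a: "f (x k) = ereal a" by (cases "f (x k)") auto
  have "ereal (blinfun_apply ys (x k - x0)) \<le> f (x k) - f x0"
    using ysd f0 unfolding subdiff_def by (auto split: if_splits)
  moreover have "blinfun_apply ys (x k - x0) = (r/2) * norm v"
    unfolding ys_def using L(2) unfolding v_def by (simp add: scaleR_blinfun.rep_eq)
  ultimately have i1: "(r/2) * norm v \<le> a" using a f0 by simp
  have "ereal (blinfun_apply (xs k) (x0 - x k)) \<le> f x0 - f (x k)"
    using sd[of k] unfolding subdiff_def by (auto split: if_splits)
  hence "blinfun_apply (xs k) (x0 - x k) \<le> - a" using a f0 by simp
  moreover have "\<bar>blinfun_apply (xs k) (x0 - x k)\<bar> \<le> norm (xs k) * norm v"
    using norm_blinfun[of "xs k" "x0 - x k"] unfolding v_def by (simp add: norm_minus_commute)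
  ultimately have "a \<le> norm (xs k) * norm v" by linarith
  also have "\<dots> < (r/2) * norm v" using k1 vpos by simp
  finally show False using i1 by simp
qed

theorem mainTheorem6:
  fixes f :: "'a::banach \<Rightarrow> ereal"
    and x :: "nat \<Rightarrow> 'a" and xs :: "nat \<Rightarrow> ('a \<Rightarrow>\<^sub>L real)"
  assumes "f \<in> Gamma0"
    and "level0 f \<noteq> {}"
    and "\<And>k. xs k \<in> subdiff f (x k)"
    and "filterlim (\<lambda>k. norm (x k)) at_top sequentially"
    and "(\<lambda>k. norm (xs k)) \<longlonglongrightarrow> 0"
    and "\<exists>b::real. \<forall>k. ereal b \<le> f (x k)"
  shows "\<forall>\<epsilon>::real. 0 \<le> \<epsilon> \<and> ereal \<epsilon> \<le> subdiff_bd f \<longrightarrow>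
           (\<forall>g \<in> Ptb f \<epsilon>. \<exists>c::real. \<forall>u. g u = f u + ereal c)"
proof (intro allI impI ballI)
  fix \<epsilon> :: real and g
  assume eps: "0 \<le> \<epsilon> \<and> ereal \<epsilon> \<le> subdiff_bd f" and g: "g \<in> Ptb f \<epsilon>"
  obtain b :: real where b: "\<And>k. ereal b \<le> f (x k)" using assms(6) by blast
  obtain p x0 \<xi> where gp: "g = (\<lambda>u. f u + ereal (p u))" and x0: "x0 \<in> level0 f" and \<xi>: "\<xi> \<ge> 0"
    and H: "ereal \<xi> + subdiff_bd f - tau f x0 \<xi> \<bar>p x0\<bar> \<le> ereal \<epsilon>"
    and Lp: "\<forall>u. \<bar>p u - p x0\<bar> \<le> \<xi> * norm (u - x0)"
    using g unfolding Ptb_def by blast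
  have f0: "f x0 = 0" using x0 unfolding level0_def by simp
  have "\<xi> = 0"
  proof (rule ccontr)
    assume "\<xi> \<noteq> 0"
    hence \<xi>p: "\<xi> > 0" using \<xi> by simp
    define \<delta> where "\<delta> = \<bar>p x0\<bar>"
    have ni: "0 \<notin> interior (subdiff f x0)" by (rule no_interior[OF assms(3,4,5) f0])
    define U where "U = {u. f u \<ge> ereal (- \<xi> * norm (u - x0) - \<delta>)}"
    have tdef: "tau f x0 \<xi> \<delta> = (INF u\<in>U. dist0 (subdiff f u))"
      unfolding tau_def U_def using ni by simp
    have tge: "tau f x0 \<xi> \<delta> \<ge> 0" unfolding tdef dist0_def
      by (intro INF_greatest) simp
    have tle: "tau f x0 \<xi> \<delta> \<le> 0"
    proof (rule ereal_le_epsilon2)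
      fix \<eta> :: real assume \<eta>: "\<eta> > 0"
      have e1: "eventually (\<lambda>k. norm (xs k) < \<eta>) sequentially"
        using order_tendstoD(2)[OF assms(5)] \<eta> by simp
      have e2: "eventually (\<lambda>k. norm x0 + \<bar>b\<bar> / \<xi> \<le> norm (x k)) sequentially"
        using assms(4) unfolding filterlim_at_top by blast
      obtain k where k1: "norm (xs k) < \<eta>" and k2: "norm x0 + \<bar>b\<bar> / \<xi> \<le> norm (x k)"
        using eventually_conj[OF e1 e2] eventually_sequentially by auto
      have "norm (x k) \<le> norm (x k - x0) + norm x0" using norm_triangle_ineq[of "x k - x0" x0] by simp
      hence "\<bar>b\<bar> / \<xi> \<le> norm (x k - x0)" using k2 by simp
      hence "\<bar>b\<bar> \<le> \<xi> * norm (x k - x0)" using \<xi>p by (simp add: divide_le_eq mult.commute)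
      hence "- \<xi> * norm (x k - x0) - \<delta> \<le> b" unfolding \<delta>_def by linarith
      hence "ereal (- \<xi> * norm (x k - x0) - \<delta>) \<le> f (x k)" using b[of k] by (meson ereal_less_eq(3) order_trans)
      hence "x k \<in> U" unfolding U_def by simp
      hence "tau f x0 \<xi> \<delta> \<le> dist0 (subdiff f (x k))" unfolding tdef by (rule INF_lower)
      also have "\<dots> \<le> ereal (norm (xs k))" unfolding dist0_def by (rule INF_lower) (rule assms(3))
      also have "\<dots> \<le> 0 + ereal \<eta>" using k1 by simp
      finally show "tau f x0 \<xi> \<delta> \<le> 0 + ereal \<eta>" .
    qed
    have t0: "tau f x0 \<xi> \<bar>p x0\<bar> = 0" using tge tle unfolding \<delta>_def by simp
    show False
    proof (cases "subdiff_bd f")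
      case (real \<beta>)
      have "ereal (\<xi> + \<beta>) \<le> ereal \<epsilon>" using H t0 real by simp
      moreover have "\<epsilon> \<le> \<beta>" using eps real by simp
      ultimately show False using \<xi>p by simp
    next
      case PInf thus False using H t0 by simp
    next
      case MInf thus False using eps by simp
    qed
  qed
  have "\<forall>u. p u = p x0"
  proof
    fix u have "\<bar>p u - p x0\<bar> \<le> 0" using Lp \<open>\<xi> = 0\<close> by (metis mult_zero_left)
    thus "p u = p x0" by simp
  qed
  hence "\<forall>u. g u = f u + ereal (p x0)" unfolding gp by metis
  thus "\<exists>c::real. \<forall>u. g u = f u + ereal c" by blast
qed

end
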